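(* For $n\ge1$ and $1\le r\le n$, the number of rooted spanning hyperforests of $\overline{\mathcal K}_n$ with exactly $r$ components is $$t_{n,r}(\mathbf 1)=\binom{n-1}{r-1}b_{n-r}(n)=\binom{n-1}{r-1}\sum_{\ell\ge0}\left\{{n-r\atop \ell}\right\}n^{\ell},$$ the total number of rooted spanning hyperforests of $\overline{\mathcal K}_n$ is $\sum_{r\ge1}t_{n,r}(\mathbf 1)=\frac{b_n(n)}{n}$, and the number of (unrooted) spanning hypertrees of $\overline{\mathcal K}_n$ is $\frac{b_{n-1}(n)}{n}=\sum_{\ell\ge0}\left\{{n-1\atop \ell}\right\}n^{\ell-1}$.
   Context: $\overline{\mathcal K}_n$ is the complete hypergraph on vertex set $\{1,\dots,n\}$ whose hyperedges are all subsets of cardinality $\ge2$. A cycle is a sequence $(v_0,e_1,v_1,\dots,e_\ell,v_\ell)$ with $\ell\ge2$, $v_{i-1},v_i\in e_i$, $v_0,\dots,v_{\ell-1}$ distinct, $v_\ell=v_0$, $e_1,\dots,e_\ell$ distinct hyperedges. A spanning hyperforest is a set of hyperedges with no cycle; components are the classes of vertices connected by walks (isolated vertices included); a spanning hypertree is a spanning hyperforest with one component; a rooted spanning hyperforest has one distinguished root per component. $\left\{{s\atop \ell}\right\}$ is the Stirling number of the second kind (number of partitions of an $s$-set into $\ell$ nonempty blocks, with $\left\{{0\atop 0}\right\}=1$), and $b_s(x):=\sum_{\ell\ge0}\left\{{s\atop \ell}\right\}x^\ell$ is the Bell polynomial, with $\sum_{s\ge0}b_s(x)y^s/s!=e^{x(e^y-1)}$.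 *)

theory Defs
  imports Complex_Main "HOL-Combinatorics.Stirling"
begin

definition hyperedges :: "nat \<Rightarrow> nat set set" where
  "hyperedges n = {e. e \<subseteq> {1..n} \<and> 2 \<le> card e}"

text \<open>A cycle (v0,e1,v1,...,el,vl): vs = [v0..v_(l-1)], es = [e1..el], with v_l = v_0.\<close>
definition has_cycle :: "nat set set \<Rightarrow> bool" where
  "has_cycle F \<longleftrightarrow> (\<exists>vs es. 2 \<le> length vs \<and> length es = length vs \<and>
      distinct vs \<and> distinct es \<and> set es \<subseteq> F \<and>
      (\<forall>i < length vs. vs ! i \<in> es ! i \<and> vs ! (Suc i mod length vs) \<in> es ! i))"

definition spanning_hyperforest :: "nat \<Rightarrow> nat set set \<Rightarrow> bool" where
  "spanning_hyperforest n F \<longleftrightarrow> F \<subseteq> hyperedges n \<and> \<not> has_cycle F"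

definition hconn :: "nat set set \<Rightarrow> nat \<Rightarrow> nat \<Rightarrow> bool" where
  "hconn F = (\<lambda>x y. \<exists>e\<in>F. x \<in> e \<and> y \<in> e)\<^sup>*\<^sup>*"

definition hcomponents :: "nat \<Rightarrow> nat set set \<Rightarrow> nat set set" where
  "hcomponents n F = (\<lambda>u. {v \<in> {1..n}. hconn F u v}) ` {1..n}"

definition spanning_hypertree :: "nat \<Rightarrow> nat set set \<Rightarrow> bool" where
  "spanning_hypertree n F \<longleftrightarrow> spanning_hyperforest n F \<and> card (hcomponents n F) = 1"

definition rooted_hyperforests :: "nat \<Rightarrow> (nat set set \<times> nat set) set" where
  "rooted_hyperforests n = {(F, R). spanning_hyperforest n F \<and> R \<subseteq> {1..n} \<and>
      (\<forall>C \<in> hcomponents n F. card (R \<inter> C) = 1)}"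

definition bell_poly :: "nat \<Rightarrow> 'a::comm_semiring_1 \<Rightarrow> 'a" where
  "bell_poly s x = (\<Sum>l\<le>s. of_nat (Stirling s l) * x ^ l)"

end

theory Submission
  imports Defs "HOL-Computational_Algebra.Formal_Power_Series" "HOL-Library.Disjoint_Sets"
begin


declare Stirling.simps(4)[simp del]

lemma stirling_sum:
  "Stirling (Suc m) (Suc l) = (\<Sum>k\<le>m. (m choose k) * Stirling k l)"
proof (induction m arbitrary: l)
  case 0
  then show ?case by (cases l) (auto simp: Stirling.simps(4))
next
  case (Suc m)
  show ?case
  proof (cases l)
    case 0
    have "(\<Sum>k\<le>Suc m. (Suc m choose k) * Stirling k 0) = 1"
      by (simp only: sum.atMost_Suc_shift) simp
    then show ?thesis using 0 by simp
  next
    case (Suc l')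
    have e2: "(\<Sum>k\<le>m. (m choose Suc k) * Stirling (Suc k) l) = (\<Sum>k\<le>m. (m choose k) * Stirling k l)"
    proof -
      have "(\<Sum>k\<le>Suc m. (m choose k) * Stirling k l) = (\<Sum>k\<le>m. (m choose Suc k) * Stirling (Suc k) l)"
        using Suc by (simp only: sum.atMost_Suc_shift) simp
      moreover have "(\<Sum>k\<le>Suc m. (m choose k) * Stirling k l) = (\<Sum>k\<le>m. (m choose k) * Stirling k l)"
        by simp
      ultimately show ?thesis by simp
    qed
    have e1: "(\<Sum>k\<le>m. (m choose k) * Stirling (Suc k) l) = l * (\<Sum>k\<le>m. (m choose k) * Stirling k l) + (\<Sum>k\<le>m. (m choose k) * Stirling k l')"
      using Suc by (simp add: Stirling.simps(4) sum_distrib_left sum.distrib algebra_simps)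
    have "(\<Sum>k\<le>Suc m. (Suc m choose k) * Stirling k l) = (\<Sum>k\<le>m. (Suc m choose Suc k) * Stirling (Suc k) l)"
      using Suc by (simp only: sum.atMost_Suc_shift) simp
    also have "\<dots> = (\<Sum>k\<le>m. (m choose k) * Stirling (Suc k) l) + (\<Sum>k\<le>m. (m choose Suc k) * Stirling (Suc k) l)"
      by (simp add: sum.distrib algebra_simps)
    finally have A: "(\<Sum>k\<le>Suc m. (Suc m choose k) * Stirling k l) = (\<Sum>k\<le>m. (m choose k) * Stirling (Suc k) l) + (\<Sum>k\<le>m. (m choose Suc k) * Stirling (Suc k) l)" .
    have B: "Stirling (Suc (Suc m)) (Suc l) = Suc l * Stirling (Suc m) (Suc l) + Stirling (Suc m) (Suc l')"
      using Suc by (simp add: Stirling.simps(4))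
    show ?thesis unfolding B A e1 e2 Suc.IH[of l] Suc.IH[of l'] by simp
  qed
qed

lemma bell_poly_Suc:
  fixes x :: "'a::comm_semiring_1"
  shows "bell_poly (Suc m) x = x * (\<Sum>k\<le>m. of_nat (m choose k) * bell_poly k x)"
proof -
  have "bell_poly (Suc m) x = (\<Sum>l\<le>m. of_nat (Stirling (Suc m) (Suc l)) * x ^ Suc l)"
    unfolding bell_poly_def by (simp only: sum.atMost_Suc_shift) simp
  also have "\<dots> = (\<Sum>l\<le>m. \<Sum>k\<le>m. x * (of_nat (m choose k) * (of_nat (Stirling k l) * x ^ l)))"
    by (simp only: stirling_sum of_nat_sum of_nat_mult sum_distrib_right) (simp add: mult_ac)
  also have "\<dots> = x * (\<Sum>l\<le>m. \<Sum>k\<le>m. of_nat (m choose k) * (of_nat (Stirling k l) * x ^ l))"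
    by (simp only: sum_distrib_left)
  also have "\<dots> = x * (\<Sum>k\<le>m. \<Sum>l\<le>m. of_nat (m choose k) * (of_nat (Stirling k l) * x ^ l))"
    by (rule arg_cong[where f="\<lambda>t. x * t"], rule sum.swap)
  also have "\<dots> = x * (\<Sum>k\<le>m. of_nat (m choose k) * bell_poly k x)"
  proof -
    have "(\<Sum>l\<le>m. of_nat (Stirling k l) * x ^ l) = bell_poly k x" if "k \<le> m" for k
    proof -
      have "(\<Sum>l\<le>m. of_nat (Stirling k l) * x ^ l) = (\<Sum>l\<le>k. of_nat (Stirling k l) * x ^ l)"
        by (rule sum.mono_neutral_right) (use that in auto)
      then show ?thesis by (simp add: bell_poly_def)
    qed
    then show ?thesis by (simp add: sum_distrib_left[symmetric])
  qed
  finally show ?thesis .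
qed


fun Gc :: "nat \<Rightarrow> nat \<Rightarrow> nat" where
  "Gc 0 r = (if r = 0 then 1 else 0)"
| "Gc (Suc n) r = (if r = 0 then 0 else
     (\<Sum>s\<le>Suc n - r. (Suc n - r choose s) * bell_poly s 1 * Gc n (r - 1 + s)))"


unbundle fps_syntax


definition bA :: "real \<Rightarrow> real fps" where
  "bA x = Abs_fps (\<lambda>m. bell_poly m x / fact m)"

lemma bA_nth: "bA x $ m = bell_poly m x / fact m"
  by (simp add: bA_def)

lemma sum_reflect_choose:
  fixes f :: "nat \<Rightarrow> real"
  shows "(\<Sum>k\<le>m. of_nat (m choose k) * f k) = (\<Sum>i\<le>m. of_nat (m choose i) * f (m - i))"
proof -
  have "(\<Sum>k\<le>m. of_nat (m choose k) * f k) = (\<Sum>i\<le>m. of_nat (m choose (m - i)) * f (m - i))"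
    by (rule sum.reindex_bij_witness[of _ "\<lambda>i. m - i" "\<lambda>i. m - i"]) auto
  also have "\<dots> = (\<Sum>i\<le>m. of_nat (m choose i) * f (m - i))"
    by (intro sum.cong refl) (simp add: binomial_symmetric[symmetric])
  finally show ?thesis .
qed

lemma bA_deriv: "fps_deriv (bA x) = fps_const x * fps_exp 1 * bA x"
proof (rule fps_ext)
  fix n
  have "fps_deriv (bA x) $ n = bell_poly (Suc n) x / fact n"
    by (simp add: bA_nth fps_deriv_nth field_simps del: of_nat_Suc)
  also have "\<dots> = x * (\<Sum>i\<le>n. of_nat (n choose i) * bell_poly (n - i) x) / fact n"
    by (simp add: bell_poly_Suc sum_reflect_choose[of n "\<lambda>k. bell_poly k x"])
  also have "\<dots> = x * (\<Sum>i\<le>n. (1 / fact i) * (bell_poly (n - i) x / fact (n - i)))"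
    by (simp add: sum_divide_distrib binomial_fact sum_distrib_left field_simps)
  also have "\<dots> = (fps_const x * fps_exp 1 * bA x) $ n"
    unfolding mult.assoc fps_mult_left_const_nth by (simp add: fps_mult_nth bA_nth atLeast0AtMost)
  finally show "fps_deriv (bA x) $ n = (fps_const x * fps_exp 1 * bA x) $ n" .
qed

lemma fps_ode_unique:
  fixes f h g :: "real fps"
  assumes "fps_deriv f = g * f" "fps_deriv h = g * h" "f $ 0 = h $ 0"
  shows "f = h"
proof -
  have "\<forall>k\<le>n. f $ k = h $ k" for n
  proof (induction n)
    case 0 then show ?case using assms(3) by simp
  next
    case (Suc n)
    have "(g * f) $ n = (g * h) $ n"
      using Suc by (auto simp: fps_mult_nth intro!: sum.cong)
    then have "fps_deriv f $ n = fps_deriv h $ n" using assms by simp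
    then have "f $ Suc n = h $ Suc n"
      by (simp add: fps_deriv_nth del: of_nat_Suc)
    then show ?case using Suc by (auto simp: le_Suc_eq)
  qed
  then show ?thesis by (intro fps_ext) blast
qed

lemma bA_add: "bA (x + y) = bA x * bA y"
proof (rule fps_ode_unique[where g = "fps_const (x + y) * fps_exp 1"])
  show "fps_deriv (bA (x + y)) = fps_const (x + y) * fps_exp 1 * bA (x + y)"
    by (rule bA_deriv)
  show "fps_deriv (bA x * bA y) = fps_const (x + y) * fps_exp 1 * (bA x * bA y)"
    by (simp add: fps_deriv_mult bA_deriv fps_const_add[symmetric] algebra_simps del: fps_const_add)
  show "bA (x + y) $ 0 = (bA x * bA y) $ 0"
    by (simp add: bA_nth bell_poly_def)
qed

lemma bell_conv:
  "bell_poly m (x + y) = (\<Sum>s\<le>m. of_nat (m choose s) * bell_poly s x * bell_poly (m - s) (y::real))"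
proof -
  have "bA (x + y) $ m = (bA x * bA y) $ m" by (simp add: bA_add)
  then have "bell_poly m (x + y) / fact m = (\<Sum>s\<le>m. bell_poly s x / fact s * (bell_poly (m - s) y / fact (m - s)))"
    by (simp add: bA_nth fps_mult_nth atLeast0AtMost)
  then have "bell_poly m (x + y) = fact m * (\<Sum>s\<le>m. bell_poly s x / fact s * (bell_poly (m - s) y / fact (m - s)))"
    by (simp add: field_simps)
  also have "\<dots> = (\<Sum>s\<le>m. of_nat (m choose s) * bell_poly s x * bell_poly (m - s) y)"
    by (simp add: sum_distrib_left binomial_fact field_simps)
  finally show ?thesis .
qed

lemma bell_weighted:
  "(x + 1) * (\<Sum>s\<le>m. of_nat (m choose s) * bell_poly s 1 * (of_nat (m - s) * bell_poly (m - s) x))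
     = x * of_nat m * bell_poly m (x + 1 :: real)"
proof -
  have D: "fps_X * fps_deriv (bA z) = Abs_fps (\<lambda>k. of_nat k * bell_poly k z / fact k)" for z
    by (simp add: fps_mult_fps_X_deriv_shift bA_nth)
  have "fps_const (x + 1) * (bA 1 * (fps_X * fps_deriv (bA x))) = fps_const x * (fps_X * fps_deriv (bA (x + 1)))"
    by (simp add: bA_deriv bA_add fps_const_add[symmetric] algebra_simps del: fps_const_add)
  then have "(fps_const (x + 1) * (bA 1 * (fps_X * fps_deriv (bA x)))) $ m = (fps_const x * (fps_X * fps_deriv (bA (x + 1)))) $ m"
    by (rule arg_cong)
  then have "(x + 1) * (bA 1 * Abs_fps (\<lambda>k. of_nat k * bell_poly k x / fact k)) $ m = x * (Abs_fps (\<lambda>k. of_nat k * bell_poly k (x + 1) / fact k)) $ m"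
    by (simp only: fps_mult_left_const_nth D)
  then have "(x + 1) * (\<Sum>s\<le>m. bell_poly s 1 / fact s * (of_nat (m - s) * bell_poly (m - s) x / fact (m - s)))
      = x * (of_nat m * bell_poly m (x + 1) / fact m)"
    by (simp add: fps_mult_nth bA_nth atLeast0AtMost)
  then have "fact m * ((x + 1) * (\<Sum>s\<le>m. bell_poly s 1 / fact s * (of_nat (m - s) * bell_poly (m - s) x / fact (m - s))))
      = x * of_nat m * bell_poly m (x + 1)"
    by (simp add: field_simps)
  moreover have "fact m * ((x + 1) * (\<Sum>s\<le>m. bell_poly s 1 / fact s * (of_nat (m - s) * bell_poly (m - s) x / fact (m - s))))
     = (x + 1) * (\<Sum>s\<le>m. of_nat (m choose s) * bell_poly s 1 * (of_nat (m - s) * bell_poly (m - s) x))"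
    by (simp add: sum_distrib_left binomial_fact field_simps)
  ultimately show ?thesis by simp
qed


lemma of_nat_bell: "(of_nat (bell_poly s n) :: 'a::comm_semiring_1) = bell_poly s (of_nat n)"
  by (simp add: bell_poly_def)

lemma Gc_closed: "r \<le> n \<Longrightarrow> real n * real (Gc n r) = real r * bell_poly (n - r) (real n)"
proof (induction n arbitrary: r)
  case 0 then show ?case by simp
next
  case (Suc n)
  show ?case
  proof (cases "r = 0")
    case True then show ?thesis by simp
  next
    case False
    define m where "m = Suc n - r"
    have mn: "m \<le> n" using False Suc.prems unfolding m_def by simp
    show ?thesis
    proof (cases "n = 0")
      case True
      then have "r = 1" using False Suc.prems by simp
      then show ?thesis using True by (simp add: bell_poly_def)
    next
      case n0: False
      have IH: "real n * real (Gc n (r - 1 + s)) = real (r - 1 + s) * bell_poly (m - s) (real n)"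
        if "s \<le> m" for s
      proof -
        have "r - 1 + s \<le> n" using that False Suc.prems unfolding m_def by simp
        moreover have "n - (r - 1 + s) = m - s" using that False Suc.prems unfolding m_def by simp
        ultimately show ?thesis using Suc.IH[of "r - 1 + s"] by simp
      qed
      have r1: "real (r - 1 + s) = real n - real (m - s)" if "s \<le> m" for s
        using that False Suc.prems unfolding m_def by (simp add: of_nat_diff)
      have "real n * (real (Suc n) * real (Gc (Suc n) r))
          = real (Suc n) * (\<Sum>s\<le>m. real (m choose s) * bell_poly s 1 * (real n * real (Gc n (r - 1 + s))))"
        using False unfolding m_def by (simp add: sum_distrib_left of_nat_bell mult_ac)
      also have "\<dots> = real (Suc n) * (\<Sum>s\<le>m. real (m choose s) * bell_poly s 1 * ((real n - real (m - s)) * bell_poly (m - s) (real n)))"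
        by (intro arg_cong[where f="\<lambda>t. real (Suc n) * t"] sum.cong refl) (metis IH r1 atMost_iff)
      also have "\<dots> = real (Suc n) * real n * (\<Sum>s\<le>m. real (m choose s) * bell_poly s 1 * bell_poly (m - s) (real n))
           - (real n + 1) * (\<Sum>s\<le>m. real (m choose s) * bell_poly s 1 * (real (m - s) * bell_poly (m - s) (real n)))"
        by (simp add: sum_distrib_left sum_subtractf[symmetric] algebra_simps)
      also have "\<dots> = real (Suc n) * real n * bell_poly m (1 + real n) - real n * real m * bell_poly m (real n + 1)"
        by (simp only: bell_conv[symmetric] bell_weighted)
      also have "\<dots> = real n * (real r * bell_poly (Suc n - r) (real (Suc n)))"
        using False Suc.prems unfolding m_def by (simp add: of_nat_diff algebra_simps)
      finally show ?thesis using n0 by simp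
    qed
  qed
qed


section \<open>Connectivity\<close>

lemma hconn_refl[simp]: "hconn F x x"
  unfolding hconn_def by simp

lemma hconn_edge: "e \<in> F \<Longrightarrow> x \<in> e \<Longrightarrow> y \<in> e \<Longrightarrow> hconn F x y"
  unfolding hconn_def by (rule r_into_rtranclp) blast

lemma hconn_trans: "hconn F x y \<Longrightarrow> hconn F y z \<Longrightarrow> hconn F x z"
  unfolding hconn_def by (rule rtranclp_trans)

lemma hconn_sym: "hconn F x y \<Longrightarrow> hconn F y x"
  unfolding hconn_def
proof (induction rule: rtranclp_induct)
  case base then show ?case by simp
next
  case (step y z)
  have "(\<lambda>x y. \<exists>e\<in>F. x \<in> e \<and> y \<in> e) z y" using step(2) by blast
  then show ?case by (rule converse_rtranclp_into_rtranclp[OF _ step.IH])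
qed

lemma hconn_mono: "hconn F x y \<Longrightarrow> F \<subseteq> F' \<Longrightarrow> hconn F' x y"
  unfolding hconn_def
proof (induction rule: rtranclp_induct)
  case base then show ?case by simp
next
  case (step y z)
  have "(\<lambda>x y. \<exists>e\<in>F'. x \<in> e \<and> y \<in> e) y z" using step by blast
  then show ?case by (rule rtranclp.rtrancl_into_rtrancl[OF step.IH[OF step.prems]])
qed

lemma hconn_isolated: "hconn F x y \<Longrightarrow> x \<notin> \<Union>F \<Longrightarrow> y = x"
  unfolding hconn_def
proof (induction rule: rtranclp_induct)
  case base then show ?case by simp
next
  case (step y z)
  then show ?case by auto
qed

lemma hconn_isolated': "x \<notin> \<Union>F \<Longrightarrow> hconn F y x \<Longrightarrow> y = x"
  using hconn_isolated hconn_sym by metis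

lemma hconn_in1: "hconn F x y \<Longrightarrow> x \<noteq> y \<Longrightarrow> x \<in> \<Union>F"
  using hconn_isolated by metis

lemma hconn_in2: "hconn F x y \<Longrightarrow> x \<noteq> y \<Longrightarrow> y \<in> \<Union>F"
  using hconn_in1 hconn_sym by metis

section \<open>Cycles\<close>

lemma has_cycle_mono: "F \<subseteq> F' \<Longrightarrow> has_cycle F \<Longrightarrow> has_cycle F'"
  unfolding has_cycle_def by blast

lemma no_cycle_empty: "\<not> has_cycle {}"
  unfolding has_cycle_def by auto

definition walkp :: "nat set set \<Rightarrow> nat list \<Rightarrow> nat set list \<Rightarrow> bool" where
  "walkp F vs es \<longleftrightarrow> length vs = Suc (length es) \<and> distinct vs \<and> distinct es \<and> set es \<subseteq> F \<and>
     (\<forall>i<length es. vs ! i \<in> es ! i \<and> vs ! Suc i \<in> es ! i)"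

lemma distinct_nth_notin_take: "distinct xs \<Longrightarrow> i < length xs \<Longrightarrow> xs ! i \<notin> set (take i xs)"
  by (metis distinct_take take_Suc_conv_app_nth distinct_append not_distinct_conv_prefix)

lemma walkpI:
  "length vs = Suc (length es) \<Longrightarrow> distinct vs \<Longrightarrow> distinct es \<Longrightarrow> set es \<subseteq> F \<Longrightarrow>
   (\<And>i. i < length es \<Longrightarrow> vs ! i \<in> es ! i) \<Longrightarrow> (\<And>i. i < length es \<Longrightarrow> vs ! Suc i \<in> es ! i) \<Longrightarrow>
   walkp F vs es"
  unfolding walkp_def by blast

lemma path_exists:
  assumes "hconn F u v"
  shows "\<exists>vs es. walkp F vs es \<and> vs ! 0 = u \<and> vs ! length es = v"
  using assms unfolding hconn_def
proof (induction rule: rtranclp_induct)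
  case base
  show ?case by (rule exI[of _ "[u]"], rule exI[of _ "[]"]) (simp add: walkp_def)
next
  case (step y z)
  from step.IH obtain vs es where W: "walkp F vs es" and u: "vs ! 0 = u" and y: "vs ! length es = y"
    by blast
  from step.hyps(2) obtain f where f: "f \<in> F" "y \<in> f" "z \<in> f" by blast
  have len: "length vs = Suc (length es)" and dv: "distinct vs" and de: "distinct es"
    and sub: "set es \<subseteq> F" and C1: "\<And>i. i < length es \<Longrightarrow> vs ! i \<in> es ! i"
    and C2: "\<And>i. i < length es \<Longrightarrow> vs ! Suc i \<in> es ! i"
    using W unfolding walkp_def by blast+
  show ?case
  proof (cases "z \<in> set vs")
    case True
    then obtain i where i: "i < length vs" "vs ! i = z" by (auto simp: in_set_conv_nth)
    have "walkp F (take (Suc i) vs) (take i es)"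
    proof (rule walkpI)
      show "length (take (Suc i) vs) = Suc (length (take i es))" using i len by simp
      show "distinct (take (Suc i) vs)" using dv by simp
      show "distinct (take i es)" using de by simp
      show "set (take i es) \<subseteq> F" using sub by (auto dest: in_set_takeD)
      fix j assume "j < length (take i es)"
      then have j: "j < i" "j < length es" by simp_all
      show "take (Suc i) vs ! j \<in> take i es ! j" using C1[of j] j by simp
      show "take (Suc i) vs ! Suc j \<in> take i es ! j" using C2[of j] j by simp
    qed
    moreover have "take (Suc i) vs ! 0 = u" using u by simp
    moreover have "take (Suc i) vs ! length (take i es) = z" using i len by simp
    ultimately show ?thesis by blast
  next
    case zn: False
    show ?thesis
    proof (cases "f \<in> set es")
      case True
      then obtain i where i: "i < length es" "es ! i = f" by (auto simp: in_set_conv_nth)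
      have fi: "f \<notin> set (take i es)"
        using de i distinct_nth_notin_take by blast
      have zi: "z \<notin> set (take (Suc i) vs)" using zn by (auto dest: in_set_takeD)
      have ltv: "length (take (Suc i) vs) = Suc i" using i len by simp
      have lte: "length (take i es) = i" using i by simp
      have "walkp F (take (Suc i) vs @ [z]) (take i es @ [f])"
      proof (rule walkpI)
        show "length (take (Suc i) vs @ [z]) = Suc (length (take i es @ [f]))" using ltv lte by simp
        show "distinct (take (Suc i) vs @ [z])" using dv zi by simp
        show "distinct (take i es @ [f])" using de fi by simp
        show "set (take i es @ [f]) \<subseteq> F" using sub f(1) by (auto dest: in_set_takeD)
        fix j assume "j < length (take i es @ [f])"
        then have ji: "j \<le> i" using lte by simp
        show "(take (Suc i) vs @ [z]) ! j \<in> (take i es @ [f]) ! j"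
        proof (cases "j = i")
          case True
          have "vs ! i \<in> f" using C1[of i] i by simp
          then show ?thesis using True ltv lte by (simp add: nth_append)
        next
          case False then show ?thesis using ji i ltv lte C1[of j] by (simp add: nth_append)
        qed
        show "(take (Suc i) vs @ [z]) ! Suc j \<in> (take i es @ [f]) ! j"
        proof (cases "j = i")
          case True then show ?thesis using ltv lte f by (simp add: nth_append)
        next
          case False then show ?thesis using ji i ltv lte C2[of j] by (simp add: nth_append)
        qed
      qed
      moreover have "(take (Suc i) vs @ [z]) ! 0 = u" using u ltv by (simp add: nth_append)
      moreover have "(take (Suc i) vs @ [z]) ! length (take i es @ [f]) = z" using ltv lte by (simp add: nth_append)
      ultimately show ?thesis by blast
    next
      case fn: False
      have "walkp F (vs @ [z]) (es @ [f])"
      proof (rule walkpI)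
        show "length (vs @ [z]) = Suc (length (es @ [f]))" using len by simp
        show "distinct (vs @ [z])" using dv zn by simp
        show "distinct (es @ [f])" using de fn by simp
        show "set (es @ [f]) \<subseteq> F" using sub f(1) by simp
        fix j assume j: "j < length (es @ [f])"
        show "(vs @ [z]) ! j \<in> (es @ [f]) ! j"
        proof (cases "j = length es")
          case True then show ?thesis using len y f by (simp add: nth_append)
        next
          case False then show ?thesis using j len C1[of j] by (simp add: nth_append)
        qed
        show "(vs @ [z]) ! Suc j \<in> (es @ [f]) ! j"
        proof (cases "j = length es")
          case True then show ?thesis using len f by (simp add: nth_append)
        next
          case False then show ?thesis using j len C2[of j] by (simp add: nth_append)
        qed
      qed
      moreover have "(vs @ [z]) ! 0 = u" using u len by (simp add: nth_append)
      moreover have "(vs @ [z]) ! length (es @ [f]) = z" using len by (simp add: nth_append)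
      ultimately show ?thesis by blast
    qed
  qed
qed

lemma cycle_of_path:
  assumes W: "walkp F vs es" and e: "e \<notin> F" and a: "vs ! 0 \<in> e" and b: "vs ! length es \<in> e"
    and ne: "vs ! 0 \<noteq> vs ! length es"
  shows "has_cycle (insert e F)"
proof -
  have len: "length vs = Suc (length es)" using W by (simp add: walkp_def)
  have es0: "length es \<noteq> 0" using ne by auto
  have eni: "e \<notin> set es" using W e by (auto simp: walkp_def)
  show ?thesis
    unfolding has_cycle_def
  proof (intro exI[of _ vs] exI[of _ "es @ [e]"] conjI allI impI)
    show "2 \<le> length vs" using len es0 by (simp add: Suc_le_eq)
    show "length (es @ [e]) = length vs" using len by simp
    show "distinct vs" using W by (simp add: walkp_def)
    show "distinct (es @ [e])" using W eni by (simp add: walkp_def)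
    show "set (es @ [e]) \<subseteq> insert e F" using W by (auto simp: walkp_def)
    fix i assume i: "i < length vs"
    show "vs ! i \<in> (es @ [e]) ! i"
    proof (cases "i = length es")
      case True then show ?thesis using b by (simp add: nth_append)
    next
      case False then show ?thesis using i len W by (simp add: nth_append walkp_def)
    qed
    show "vs ! (Suc i mod length vs) \<in> (es @ [e]) ! i"
    proof (cases "i = length es")
      case True then show ?thesis using a len by (simp add: nth_append)
    next
      case False then show ?thesis using i len W by (simp add: nth_append walkp_def)
    qed
  qed
qed

lemma forest_insert_not_conn:
  assumes "\<not> has_cycle (insert e F)" "e \<notin> F" "u \<in> e" "v \<in> e" "u \<noteq> v"
  shows "\<not> hconn F u v"
proof
  assume "hconn F u v"
  then obtain vs es where "walkp F vs es" "vs ! 0 = u" "vs ! length es = v"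
    using path_exists by blast
  then have "has_cycle (insert e F)" using cycle_of_path assms by metis
  then show False using assms by simp
qed

lemma cycle_insert_conn:
  assumes nc: "\<not> has_cycle F" and c: "has_cycle (insert e F)"
  shows "\<exists>u\<in>e. \<exists>v\<in>e. u \<noteq> v \<and> hconn F u v"
proof -
  from c obtain vs es where l2: "2 \<le> length vs" and le: "length es = length vs"
    and dv: "distinct vs" and de: "distinct es" and sub: "set es \<subseteq> insert e F"
    and C: "\<forall>i < length vs. vs ! i \<in> es ! i \<and> vs ! (Suc i mod length vs) \<in> es ! i"
    unfolding has_cycle_def by blast
  define l where "l = length vs"
  have "e \<in> set es"
  proof (rule ccontr)
    assume "e \<notin> set es"
    then have "set es \<subseteq> F" using sub by auto
    then have "has_cycle F" unfolding has_cycle_def using l2 le dv de C by blast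
    then show False using nc by simp
  qed
  then obtain j where j: "j < l" "es ! j = e" using le unfolding l_def by (auto simp: in_set_conv_nth)
  have inF: "es ! i \<in> F" if "i < l" "i \<noteq> j" for i
  proof -
    have "es ! i \<noteq> es ! j" using de that j le unfolding l_def by (metis nth_eq_iff_index_eq)
    moreover have "es ! i \<in> insert e F" using sub that le unfolding l_def by (auto simp: set_conv_nth)
    ultimately show ?thesis using j by simp
  qed
  have stp: "hconn F (vs ! i) (vs ! (Suc i mod l))" if "i < l" "i \<noteq> j" for i
    using hconn_edge[OF inF[OF that]] C that unfolding l_def by blast
  have c1: "hconn F (vs ! 0) (vs ! k)" if "k \<le> j" for k
    using that
  proof (induction k)
    case 0 then show ?case by simp
  next
    case (Suc k)
    then have h1: "hconn F (vs ! k) (vs ! (Suc k mod l))" using stp[of k] j by simp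
    have h2: "Suc k mod l = Suc k" using Suc.prems j by simp
    have h3: "hconn F (vs ! 0) (vs ! k)" using Suc.IH Suc.prems by simp
    show ?case using hconn_trans[OF h3 h1] h2 by simp
  qed
  have c2: "hconn F (vs ! k) (vs ! 0)" if "Suc j \<le> k" "k < l" for k
  proof -
    have "k \<le> l - 1" using that by simp
    then show ?thesis
    proof (induction k rule: inc_induct)
      case base
      have "Suc (l - 1) = l" using l2 unfolding l_def by simp
      then have "Suc (l - 1) mod l = 0" by simp
      then show ?case using stp[of "l - 1"] that l2 unfolding l_def by simp
    next
      case (step n)
      have h1: "hconn F (vs ! n) (vs ! (Suc n mod l))" using stp[of n] step that by simp
      have h2: "Suc n mod l = Suc n" using step by simp
      show ?case using hconn_trans[OF h1[unfolded h2] step.IH] .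
    qed
  qed
  have uv: "vs ! j \<noteq> vs ! (Suc j mod l)"
  proof -
    have "j \<noteq> Suc j mod l"
      using j l2 unfolding l_def by (cases "Suc j < l") (auto simp: mod_if)
    moreover have "Suc j mod l < l" using j by simp
    ultimately show ?thesis using dv j unfolding l_def by (simp add: nth_eq_iff_index_eq)
  qed
  have conn: "hconn F (vs ! (Suc j mod l)) (vs ! j)"
  proof (cases "Suc j < l")
    case True
    then show ?thesis using c2[of "Suc j"] c1[of j] hconn_trans by simp
  next
    case False
    then have "Suc j = l" using j by simp
    then show ?thesis using c1[of j] by simp
  qed
  show ?thesis
    using C j uv conn hconn_sym unfolding l_def by blast
qed


definition clK :: "nat set set \<Rightarrow> nat \<Rightarrow> nat set set \<Rightarrow> nat set" where
  "clK F' \<rho> P = insert \<rho> {y. \<exists>s\<in>\<Union>P. hconn F' s y}"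

lemma clK_closed:
  assumes "\<rho> \<notin> \<Union>F'" "y \<in> clK F' \<rho> P" "hconn F' y z"
  shows "z \<in> clK F' \<rho> P"
proof (cases "y = \<rho>")
  case True
  then have "z = \<rho>" using hconn_isolated assms by metis
  then show ?thesis by (simp add: clK_def)
next
  case False
  then obtain s where "s \<in> \<Union>P" "hconn F' s y" using assms(2) by (auto simp: clK_def)
  then show ?thesis using assms(3) hconn_trans unfolding clK_def by blast
qed

lemma clK_closed':
  assumes "\<rho> \<notin> \<Union>F'" "y \<in> clK F' \<rho> P" "hconn F' x y"
  shows "x \<in> clK F' \<rho> P"
  using clK_closed[OF assms(1,2) hconn_sym[OF assms(3)]] .

lemma clK_S: "s \<in> \<Union>P \<Longrightarrow> s \<in> clK F' \<rho> P"
  unfolding clK_def using hconn_refl by blast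

lemma clK_rho: "\<rho> \<in> clK F' \<rho> P"
  unfolding clK_def by blast

lemma hconn_union:
  assumes iso: "\<rho> \<notin> \<Union>F'"
  shows "hconn (F' \<union> insert \<rho> ` P) x y \<longleftrightarrow> hconn F' x y \<or> (x \<in> clK F' \<rho> P \<and> y \<in> clK F' \<rho> P)"
proof
  assume "hconn (F' \<union> insert \<rho> ` P) x y"
  then show "hconn F' x y \<or> (x \<in> clK F' \<rho> P \<and> y \<in> clK F' \<rho> P)"
    unfolding hconn_def[of "F' \<union> insert \<rho> ` P"]
  proof (induction rule: rtranclp_induct)
    case base then show ?case by simp
  next
    case (step y z)
    from step.hyps(2) obtain f where f: "f \<in> F' \<union> insert \<rho> ` P" "y \<in> f" "z \<in> f" by blast
    show ?case
    proof (cases "f \<in> F'")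
      case True
      then have yz: "hconn F' y z" using f hconn_edge by blast
      from step.IH show ?thesis
      proof
        assume "hconn F' x y" then show ?thesis using yz hconn_trans by blast
      next
        assume "x \<in> clK F' \<rho> P \<and> y \<in> clK F' \<rho> P"
        then show ?thesis using clK_closed[OF iso _ yz] by blast
      qed
    next
      case False
      then obtain B where B: "B \<in> P" "f = insert \<rho> B" using f(1) by blast
      have inK: "t \<in> clK F' \<rho> P" if "t \<in> insert \<rho> B" for t
        using that B(1) clK_rho[of \<rho> F' P] clK_S[of t P F' \<rho>] by blast
      have yK: "y \<in> clK F' \<rho> P" and zK: "z \<in> clK F' \<rho> P"
        using f(2,3) B(2) inK by auto
      from step.IH have "x \<in> clK F' \<rho> P"
        using clK_closed'[OF iso yK] by blast
      then show ?thesis using zK by blast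
    qed
  qed
next
  let ?U = "F' \<union> insert \<rho> ` P"
  have toK: "hconn ?U \<rho> k" if kK: "k \<in> clK F' \<rho> P" for k
  proof (cases "k = \<rho>")
    case True then show ?thesis by simp
  next
    case False
    then obtain s B where sB: "B \<in> P" "s \<in> B" "hconn F' s k" using kK by (auto simp: clK_def)
    have "hconn ?U \<rho> s" using sB by (intro hconn_edge[of "insert \<rho> B"]) auto
    moreover have "hconn ?U s k" using sB(3) by (rule hconn_mono) auto
    ultimately show ?thesis using hconn_trans by blast
  qed
  assume "hconn F' x y \<or> (x \<in> clK F' \<rho> P \<and> y \<in> clK F' \<rho> P)"
  then show "hconn ?U x y"
  proof
    assume "hconn F' x y" then show ?thesis by (rule hconn_mono) auto
  next
    assume xy: "x \<in> clK F' \<rho> P \<and> y \<in> clK F' \<rho> P"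
    have "hconn ?U x \<rho>" using toK[of x] xy hconn_sym by blast
    then show ?thesis using toK[of y] xy hconn_trans by blast
  qed
qed

lemma forest_add:
  assumes nc: "\<not> has_cycle F'" and iso: "\<rho> \<notin> \<Union>F'" and fin: "finite P"
  shows "disjoint P \<Longrightarrow> \<rho> \<notin> \<Union>P \<Longrightarrow>
    (\<And>s1 s2. s1 \<in> \<Union>P \<Longrightarrow> s2 \<in> \<Union>P \<Longrightarrow> hconn F' s1 s2 \<Longrightarrow> s1 = s2) \<Longrightarrow>
    \<not> has_cycle (F' \<union> insert \<rho> ` P)"
  using fin
proof (induction P rule: finite_induct)
  case empty then show ?case using nc by simp
next
  case (insert B P0)
  have d0: "disjoint P0" using insert.prems(1) by (simp add: pairwise_insert)
  have IH: "\<not> has_cycle (F' \<union> insert \<rho> ` P0)"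
    using insert.IH d0 insert.prems(2,3) by auto
  let ?F0 = "F' \<union> insert \<rho> ` P0"
  have eq: "F' \<union> insert \<rho> ` insert B P0 = insert (insert \<rho> B) ?F0" by auto
  show ?case
  proof
    assume "has_cycle (F' \<union> insert \<rho> ` insert B P0)"
    then have "has_cycle (insert (insert \<rho> B) ?F0)" using eq by simp
    then obtain u v where uv: "u \<in> insert \<rho> B" "v \<in> insert \<rho> B" "u \<noteq> v" "hconn ?F0 u v"
      using cycle_insert_conn[OF IH] by blast
    have rB: "\<rho> \<notin> B" using insert.prems(2) by auto
    obtain w where w: "w \<in> B" "w \<in> {u, v}" using uv by auto
    from uv(4) have "hconn F' u v \<or> (u \<in> clK F' \<rho> P0 \<and> v \<in> clK F' \<rho> P0)"
      using hconn_union[OF iso] by blast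
    then show False
    proof
      assume h: "hconn F' u v"
      show False
      proof (cases "u = \<rho> \<or> v = \<rho>")
        case True
        then show False using h uv(3) hconn_isolated hconn_isolated' iso by metis
      next
        case False
        then have "u \<in> \<Union>(insert B P0)" "v \<in> \<Union>(insert B P0)" using uv by auto
        then show False using insert.prems(3) h uv(3) by blast
      qed
    next
      assume "u \<in> clK F' \<rho> P0 \<and> v \<in> clK F' \<rho> P0"
      then have wK: "w \<in> clK F' \<rho> P0" using w by auto
      have "w \<noteq> \<rho>" using w rB by auto
      then obtain s where s: "s \<in> \<Union>P0" "hconn F' s w" using wK by (auto simp: clK_def)
      have "s = w" using insert.prems(3)[of s w] s w by auto
      then obtain B' where B': "B' \<in> P0" "w \<in> B'" using s by auto
      have "B' \<noteq> B" using B' insert.hyps(2) by auto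
      then have "disjnt B B'" using insert.prems(1) B' by (auto simp: pairwise_def)
      then show False using w B' by (auto simp: disjnt_def)
    qed
  qed
qed

lemma two_cycle:
  assumes "e1 \<in> F" "e2 \<in> F" "e1 \<noteq> e2" "a \<noteq> b" "a \<in> e1" "b \<in> e1" "a \<in> e2" "b \<in> e2"
  shows "has_cycle F"
  unfolding has_cycle_def
proof (intro exI[of _ "[a, b]"] exI[of _ "[e1, e2]"] conjI allI impI)
  fix i assume "i < length [a, b]"
  then have "i = 0 \<or> i = 1" by auto
  then show "[a, b] ! i \<in> [e1, e2] ! i" "[a, b] ! (Suc i mod length [a, b]) \<in> [e1, e2] ! i"
    using assms by auto
qed (use assms in auto)

lemma card1_eq: "card A = 1 \<Longrightarrow> a \<in> A \<Longrightarrow> b \<in> A \<Longrightarrow> a = b"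
  by (metis card_1_singletonE singletonD)


definition edgesOn :: "nat set \<Rightarrow> nat set set" where
  "edgesOn V = {e. e \<subseteq> V \<and> 2 \<le> card e}"

definition RF :: "nat set \<Rightarrow> nat set \<Rightarrow> nat set set set" where
  "RF V R = {F. F \<subseteq> edgesOn V \<and> \<not> has_cycle F \<and> (\<forall>u\<in>V. card (R \<inter> {v\<in>V. hconn F u v}) = 1)}"

definition Dom :: "nat set \<Rightarrow> nat set \<Rightarrow> nat \<Rightarrow> (nat set \<times> nat set set \<times> nat set set) set" where
  "Dom V R \<rho> = (SIGMA S:Pow (V - R). SIGMA P:{P. partition_on S P}. RF (V - {\<rho>}) ((R - {\<rho>}) \<union> S))"

definition Phi :: "nat \<Rightarrow> nat set \<times> nat set set \<times> nat set set \<Rightarrow> nat set set" where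
  "Phi \<rho> x = (case x of (S, P, F') \<Rightarrow> F' \<union> insert \<rho> ` P)"

lemma RF_D:
  assumes "F \<in> RF V R"
  shows "F \<subseteq> edgesOn V" "\<not> has_cycle F" "\<And>u. u \<in> V \<Longrightarrow> card (R \<inter> {v\<in>V. hconn F u v}) = 1"
  using assms unfolding RF_def by auto

lemma edgesOn_sub: "F \<subseteq> edgesOn V \<Longrightarrow> e \<in> F \<Longrightarrow> e \<subseteq> V"
  unfolding edgesOn_def by auto

lemma Phi_into:
  assumes finV: "finite V" and RV: "R \<subseteq> V" and rR: "\<rho> \<in> R"
    and S: "S \<subseteq> V - R" and P: "partition_on S P" and F': "F' \<in> RF (V - {\<rho>}) ((R - {\<rho>}) \<union> S)"
  shows "F' \<union> insert \<rho> ` P \<in> RF V R"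
proof -
  let ?V' = "V - {\<rho>}" and ?R' = "(R - {\<rho>}) \<union> S" and ?F = "F' \<union> insert \<rho> ` P"
  let ?K = "clK F' \<rho> P"
  have F'e: "F' \<subseteq> edgesOn ?V'" and F'nc: "\<not> has_cycle F'"
    and F'r: "\<And>u. u \<in> ?V' \<Longrightarrow> card (?R' \<inter> {v\<in>?V'. hconn F' u v}) = 1"
    using RF_D[OF F'] by auto
  have iso: "\<rho> \<notin> \<Union>F'" using F'e unfolding edgesOn_def by auto
  have US: "\<Union>P = S" using P by (simp add: partition_on_def)
  have rS: "\<rho> \<notin> S" using S rR by auto
  have SV: "S \<subseteq> V" using S by auto
  have finS: "finite S" using SV finV finite_subset by auto
  have finP: "finite P" using P finS finite_elements by auto
  have SR': "S \<subseteq> ?R'" by auto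
  have Suniq: "s1 = s2" if "s1 \<in> S" "s2 \<in> S" "hconn F' s1 s2" for s1 s2
  proof -
    have "s1 \<in> ?V'" "s2 \<in> ?V'" using that SV rS by auto
    then have "card (?R' \<inter> {v\<in>?V'. hconn F' s1 v}) = 1" using F'r by blast
    moreover have "s1 \<in> ?R' \<inter> {v\<in>?V'. hconn F' s1 v}" using \<open>s1 \<in> ?V'\<close> that(1) by simp
    moreover have "s2 \<in> ?R' \<inter> {v\<in>?V'. hconn F' s1 v}" using \<open>s2 \<in> ?V'\<close> that by simp
    ultimately show ?thesis by (rule card1_eq)
  qed
  have edges: "?F \<subseteq> edgesOn V"
  proof
    fix e assume "e \<in> ?F"
    then show "e \<in> edgesOn V"
    proof
      assume "e \<in> F'" then show ?thesis using F'e unfolding edgesOn_def by auto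
    next
      assume "e \<in> insert \<rho> ` P"
      then obtain B where B: "B \<in> P" "e = insert \<rho> B" by blast
      have "B \<subseteq> S" using B US by auto
      moreover have "B \<noteq> {}" using B P by (auto simp: partition_on_def)
      moreover have "finite B" using \<open>B \<subseteq> S\<close> finS finite_subset by auto
      ultimately have "card e = Suc (card B)" "card B \<ge> 1" using B rS
        by (auto simp: card_insert_if Suc_le_eq card_gt_0_iff)
      then show ?thesis using B \<open>B \<subseteq> S\<close> SV rR RV unfolding edgesOn_def by auto
    qed
  qed
  have nc: "\<not> has_cycle ?F"
    using forest_add[OF F'nc iso finP] P US rS Suniq by (auto simp: partition_on_def)
  have roots: "card (R \<inter> {v\<in>V. hconn ?F u v}) = 1" if uV: "u \<in> V" for u
  proof (cases "u \<in> ?K")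
    case True
    have "R \<inter> {v\<in>V. hconn ?F u v} = {\<rho>}"
    proof (intro equalityI subsetI)
      fix v assume v: "v \<in> R \<inter> {v\<in>V. hconn ?F u v}"
      show "v \<in> {\<rho>}"
      proof (rule ccontr)
        assume vr: "v \<notin> {\<rho>}"
        have "hconn F' u v \<or> v \<in> ?K" using v hconn_union[OF iso] by blast
        then have vK: "v \<in> ?K" using clK_closed[OF iso True] by blast
        then obtain s where s: "s \<in> S" "hconn F' s v" using vr US by (auto simp: clK_def)
        have "s \<in> ?V'" "v \<in> ?V'" using s SV rS v vr by auto
        then have "card (?R' \<inter> {w\<in>?V'. hconn F' s w}) = 1" using F'r by blast
        moreover have "s \<in> ?R' \<inter> {w\<in>?V'. hconn F' s w}" using \<open>s \<in> ?V'\<close> s by simp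
        moreover have "v \<in> ?R' \<inter> {w\<in>?V'. hconn F' s w}" using \<open>v \<in> ?V'\<close> s v by simp
        ultimately have "s = v" by (rule card1_eq)
        then show False using s S v by auto
      qed
    next
      fix v assume "v \<in> {\<rho>}"
      then have "v = \<rho>" by simp
      moreover have "hconn ?F u \<rho>" using hconn_union[OF iso] True clK_rho by blast
      ultimately show "v \<in> R \<inter> {v\<in>V. hconn ?F u v}" using rR RV by auto
    qed
    then show ?thesis by simp
  next
    case False
    have ur: "u \<noteq> \<rho>" using False clK_rho by metis
    have X: "{v\<in>V. hconn ?F u v} = {v\<in>?V'. hconn F' u v}"
    proof (intro equalityI subsetI)
      fix v assume v: "v \<in> {v\<in>V. hconn ?F u v}"
      then have h: "hconn F' u v" using hconn_union[OF iso] False by blast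
      have "v \<noteq> \<rho>" using h ur hconn_isolated'[OF iso] by metis
      then show "v \<in> {v\<in>?V'. hconn F' u v}" using v h by simp
    next
      fix v assume "v \<in> {v\<in>?V'. hconn F' u v}"
      then show "v \<in> {v\<in>V. hconn ?F u v}" using hconn_union[OF iso] by auto
    qed
    have "R \<inter> {v\<in>?V'. hconn F' u v} = ?R' \<inter> {v\<in>?V'. hconn F' u v}"
    proof (intro equalityI subsetI)
      fix v assume "v \<in> R \<inter> {v\<in>?V'. hconn F' u v}" then show "v \<in> ?R' \<inter> {v\<in>?V'. hconn F' u v}" by auto
    next
      fix v assume v: "v \<in> ?R' \<inter> {v\<in>?V'. hconn F' u v}"
      have "v \<notin> S"
      proof
        assume "v \<in> S"
        then have "v \<in> ?K" using clK_S US by metis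
        then have "u \<in> ?K" using clK_closed'[OF iso] v by blast
        then show False using False by simp
      qed
      then show "v \<in> R \<inter> {v\<in>?V'. hconn F' u v}" using v by auto
    qed
    moreover have "u \<in> ?V'" using uV ur by simp
    ultimately show ?thesis using X F'r by simp
  qed
  show ?thesis unfolding RF_def using edges nc roots by blast
qed


lemma Phi_inj:
  assumes rR: "\<rho> \<in> R"
  shows "inj_on (Phi \<rho>) (Dom V R \<rho>)"
proof (rule inj_onI)
  fix x y assume x: "x \<in> Dom V R \<rho>" and y: "y \<in> Dom V R \<rho>" and eq: "Phi \<rho> x = Phi \<rho> y"
  obtain S1 P1 F1 where x': "x = (S1, P1, F1)" by (cases x) auto
  obtain S2 P2 F2 where y': "y = (S2, P2, F2)" by (cases y) auto
  have h1: "S1 \<subseteq> V - R" "partition_on S1 P1" "F1 \<subseteq> edgesOn (V - {\<rho>})"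
    using x unfolding x' Dom_def RF_def by auto
  have h2: "S2 \<subseteq> V - R" "partition_on S2 P2" "F2 \<subseteq> edgesOn (V - {\<rho>})"
    using y unfolding y' Dom_def RF_def by auto
  have iso1: "\<forall>e\<in>F1. \<rho> \<notin> e" and iso2: "\<forall>e\<in>F2. \<rho> \<notin> e"
    using h1(3) h2(3) unfolding edgesOn_def by auto
  have nb1: "\<forall>B\<in>P1. \<rho> \<notin> B" using h1(1,2) rR by (auto simp: partition_on_def)
  have nb2: "\<forall>B\<in>P2. \<rho> \<notin> B" using h2(1,2) rR by (auto simp: partition_on_def)
  let ?G = "F1 \<union> insert \<rho> ` P1"
  have G2: "?G = F2 \<union> insert \<rho> ` P2" using eq unfolding x' y' Phi_def by simp
  have "F1 = {e\<in>?G. \<rho> \<notin> e}" using iso1 by auto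
  moreover have "F2 = {e\<in>?G. \<rho> \<notin> e}" unfolding G2 using iso2 by auto
  ultimately have F: "F1 = F2" by simp
  have "P1 = (\<lambda>e. e - {\<rho>}) ` {e\<in>?G. \<rho> \<in> e}"
  proof -
    have "{e\<in>?G. \<rho> \<in> e} = insert \<rho> ` P1" using iso1 by auto
    moreover have "(\<lambda>e. e - {\<rho>}) ` insert \<rho> ` P1 = P1"
      using nb1 by (force simp: image_image)
    ultimately show ?thesis by simp
  qed
  moreover have "P2 = (\<lambda>e. e - {\<rho>}) ` {e\<in>?G. \<rho> \<in> e}"
  proof -
    have "{e\<in>?G. \<rho> \<in> e} = insert \<rho> ` P2" unfolding G2 using iso2 by auto
    moreover have "(\<lambda>e. e - {\<rho>}) ` insert \<rho> ` P2 = P2"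
      using nb2 by (force simp: image_image)
    ultimately show ?thesis by simp
  qed
  ultimately have P: "P1 = P2" by simp
  have "S1 = S2" using h1(2) h2(2) P by (simp add: partition_on_def)
  then show "x = y" using F P x' y' by simp
qed

lemma S_unique:
  assumes nc: "\<not> has_cycle F" and e1: "e1 \<in> F" "\<rho> \<in> e1" "s \<in> e1" and e2: "e2 \<in> F" "\<rho> \<in> e2" "v \<in> e2"
    and sr: "s \<noteq> \<rho>" and vr: "v \<noteq> \<rho>" and h: "hconn {e\<in>F. \<rho> \<notin> e} s v"
  shows "s = v"
proof (rule ccontr)
  assume sv: "s \<noteq> v"
  let ?F0 = "F - {e2}"
  have F: "insert e2 ?F0 = F" using e2 by auto
  have nc': "\<not> has_cycle (insert e2 ?F0)" using F nc by simp
  have h0: "hconn ?F0 s v" using h by (rule hconn_mono) (use e2 in auto)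
  show False
  proof (cases "s \<in> e2")
    case True
    then show False using forest_insert_not_conn[OF nc' _ True e2(3) sv] h0 by simp
  next
    case False
    then have "e1 \<noteq> e2" using e1 by auto
    then have "e1 \<in> ?F0" using e1 by simp
    then have "hconn ?F0 \<rho> s" using e1 hconn_edge by metis
    then have "hconn ?F0 \<rho> v" using h0 hconn_trans by metis
    then show False using forest_insert_not_conn[OF nc' _ e2(2) e2(3)] vr by auto
  qed
qed

lemma Phi_onto:
  assumes finV: "finite V" and RV: "R \<subseteq> V" and rR: "\<rho> \<in> R" and FR: "F \<in> RF V R"
  shows "F \<in> Phi \<rho> ` Dom V R \<rho>"
proof -
  have Fe: "F \<subseteq> edgesOn V" and nc: "\<not> has_cycle F"
    and Fr: "\<And>u. u \<in> V \<Longrightarrow> card (R \<inter> {v\<in>V. hconn F u v}) = 1"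
    using RF_D[OF FR] by auto
  let ?V' = "V - {\<rho>}"
  define F' where "F' = {e\<in>F. \<rho> \<notin> e}"
  define P where "P = (\<lambda>e. e - {\<rho>}) ` {e\<in>F. \<rho> \<in> e}"
  define S where "S = \<Union>P"
  let ?R' = "(R - {\<rho>}) \<union> S"
  let ?K = "clK F' \<rho> P"
  have rV: "\<rho> \<in> V" using rR RV by auto
  have iso: "\<rho> \<notin> \<Union>F'" unfolding F'_def by auto
  have nbP: "\<rho> \<notin> \<Union>P" unfolding P_def by auto
  have Feq: "F = F' \<union> insert \<rho> ` P"
  proof -
    have "insert \<rho> ` P = {e\<in>F. \<rho> \<in> e}" unfolding P_def by (force simp: image_image insert_absorb)
    then show ?thesis unfolding F'_def by auto
  qed
  have hF: "hconn F x y \<longleftrightarrow> hconn F' x y \<or> (x \<in> ?K \<and> y \<in> ?K)" for x y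
    using hconn_union[OF iso, of P x y] Feq by simp
  have Sdesc: "\<exists>e. e \<in> F \<and> \<rho> \<in> e \<and> s \<in> e \<and> s \<noteq> \<rho>" if "s \<in> S" for s
    using that unfolding S_def P_def by auto
  have rcomp: "v = \<rho>" if "v \<in> R" "v \<in> V" "hconn F \<rho> v" for v
  proof -
    have "card (R \<inter> {w\<in>V. hconn F \<rho> w}) = 1" using Fr rV by blast
    moreover have "\<rho> \<in> R \<inter> {w\<in>V. hconn F \<rho> w}" using rR rV by simp
    moreover have "v \<in> R \<inter> {w\<in>V. hconn F \<rho> w}" using that by simp
    ultimately show ?thesis using card1_eq by metis
  qed
  have SVR: "S \<subseteq> V - R"
  proof
    fix s assume "s \<in> S"
    then obtain e where e: "e \<in> F" "\<rho> \<in> e" "s \<in> e" "s \<noteq> \<rho>" using Sdesc by blast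
    have sV: "s \<in> V" using e Fe edgesOn_sub by blast
    have "hconn F \<rho> s" using e hconn_edge by metis
    then have "s \<notin> R" using rcomp sV e(4) by blast
    then show "s \<in> V - R" using sV by simp
  qed
  have part: "partition_on S P"
  proof (rule partition_onI)
    show "\<Union>P = S" unfolding S_def ..
    show "{} \<notin> P"
    proof
      assume "{} \<in> P"
      then obtain e where e: "e \<in> F" "\<rho> \<in> e" "e - {\<rho>} = {}" unfolding P_def by auto
      then have "e \<subseteq> {\<rho>}" by auto
      then have "card e \<le> 1" using card_mono[of "{\<rho>}" e] by simp
      then show False using e Fe unfolding edgesOn_def by auto
    qed
    fix p q assume p: "p \<in> P" and q: "q \<in> P" and pq: "p \<noteq> q"
    obtain e1 where e1: "e1 \<in> F" "\<rho> \<in> e1" "p = e1 - {\<rho>}" using p unfolding P_def by auto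
    obtain e2 where e2: "e2 \<in> F" "\<rho> \<in> e2" "q = e2 - {\<rho>}" using q unfolding P_def by auto
    have "e1 \<noteq> e2" using pq e1 e2 by auto
    show "disjnt p q"
    proof (rule ccontr)
      assume "\<not> disjnt p q"
      then obtain w where "w \<in> p" "w \<in> q" by (auto simp: disjnt_def)
      then have "has_cycle F" using two_cycle[OF e1(1) e2(1) \<open>e1 \<noteq> e2\<close>, of \<rho> w] e1 e2 by auto
      then show False using nc by simp
    qed
  qed
  have F'e: "F' \<subseteq> edgesOn ?V'" using Fe unfolding F'_def edgesOn_def by auto
  have F'nc: "\<not> has_cycle F'" using nc has_cycle_mono[of F' F] unfolding F'_def by auto
  have Suniq: "s = v" if sv: "s \<in> S" "v \<in> S" "hconn F' s v" for s v
  proof -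
    obtain e1 where e1: "e1 \<in> F" "\<rho> \<in> e1" "s \<in> e1" "s \<noteq> \<rho>" using Sdesc sv(1) by blast
    obtain e2 where e2: "e2 \<in> F" "\<rho> \<in> e2" "v \<in> e2" "v \<noteq> \<rho>" using Sdesc sv(2) by blast
    show ?thesis using S_unique[OF nc e1(1-3) e2(1-3) e1(4) e2(4)] sv(3) unfolding F'_def by simp
  qed
  have F'r: "card (?R' \<inter> {v\<in>?V'. hconn F' u v}) = 1" if uV: "u \<in> ?V'" for u
  proof (cases "u \<in> ?K")
    case True
    have ur: "u \<noteq> \<rho>" using uV by simp
    then obtain s where s: "s \<in> S" "hconn F' s u" using True unfolding clK_def S_def by auto
    have sV: "s \<in> ?V'" using s SVR rR by auto
    have "?R' \<inter> {v\<in>?V'. hconn F' u v} = {s}"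
    proof (intro equalityI subsetI)
      fix v assume v: "v \<in> ?R' \<inter> {v\<in>?V'. hconn F' u v}"
      have sv: "hconn F' s v" using s(2) v hconn_trans by blast
      show "v \<in> {s}"
      proof (cases "v \<in> S")
        case True then show ?thesis using Suniq s(1) sv by auto
      next
        case False
        then have vR: "v \<in> R" "v \<noteq> \<rho>" "v \<in> V" using v by auto
        have "s \<in> ?K" using clK_S s(1) unfolding S_def by metis
        then have "v \<in> ?K" using clK_closed[OF iso _ sv] by blast
        then have "hconn F \<rho> v" using hF clK_rho by blast
        then show ?thesis using rcomp vR by blast
      qed
    next
      fix v assume "v \<in> {s}"
      then show "v \<in> ?R' \<inter> {v\<in>?V'. hconn F' u v}" using s sV hconn_sym by auto
    qed
    then show ?thesis by simp
  next
    case False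
    have ur: "u \<noteq> \<rho>" using uV by simp
    have X: "{v\<in>V. hconn F u v} = {v\<in>?V'. hconn F' u v}"
    proof (intro equalityI subsetI)
      fix v assume v: "v \<in> {v\<in>V. hconn F u v}"
      then have h: "hconn F' u v" using hF False by blast
      have "v \<noteq> \<rho>" using h ur hconn_isolated'[OF iso] by metis
      then show "v \<in> {v\<in>?V'. hconn F' u v}" using v h by simp
    next
      fix v assume "v \<in> {v\<in>?V'. hconn F' u v}"
      then show "v \<in> {v\<in>V. hconn F u v}" using hF by auto
    qed
    have "?R' \<inter> {v\<in>?V'. hconn F' u v} = R \<inter> {v\<in>?V'. hconn F' u v}"
    proof (intro equalityI subsetI)
      fix v assume v: "v \<in> ?R' \<inter> {v\<in>?V'. hconn F' u v}"
      have "v \<notin> S"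
      proof
        assume "v \<in> S"
        then have "v \<in> ?K" using clK_S unfolding S_def by metis
        then have "u \<in> ?K" using clK_closed'[OF iso] v by blast
        then show False using False by simp
      qed
      then show "v \<in> R \<inter> {v\<in>?V'. hconn F' u v}" using v by auto
    next
      fix v assume "v \<in> R \<inter> {v\<in>?V'. hconn F' u v}" then show "v \<in> ?R' \<inter> {v\<in>?V'. hconn F' u v}" by auto
    qed
    moreover have "card (R \<inter> {v\<in>V. hconn F u v}) = 1" using Fr uV by simp
    ultimately show ?thesis unfolding X by simp
  qed
  have "F' \<in> RF ?V' ?R'" unfolding RF_def using F'e F'nc F'r by blast
  then have "(S, P, F') \<in> Dom V R \<rho>" unfolding Dom_def using SVR part by auto
  moreover have "Phi \<rho> (S, P, F') = F" unfolding Phi_def using Feq by simp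
  ultimately show ?thesis by (metis image_eqI)
qed


lemma sum_Pow_card:
  fixes h :: "nat \<Rightarrow> nat"
  assumes "finite M"
  shows "(\<Sum>T\<in>Pow M. h (card T)) = (\<Sum>k\<le>card M. (card M choose k) * h k)"
proof -
  have sub: "card ` Pow M \<subseteq> {..card M}" using assms by (auto intro: card_mono)
  have "(\<Sum>T\<in>Pow M. h (card T)) = (\<Sum>k\<in>{..card M}. \<Sum>T\<in>{T \<in> Pow M. card T = k}. h (card T))"
    using sum.group[OF finite_Pow_iff[THEN iffD2, OF assms] finite_atMost sub, of "\<lambda>T. h (card T)"] by simp
  also have "\<dots> = (\<Sum>k\<le>card M. (card M choose k) * h k)"
  proof (rule sum.cong[OF refl])
    fix k
    have "(\<Sum>T\<in>{T \<in> Pow M. card T = k}. h (card T)) = (\<Sum>T\<in>{T \<in> Pow M. card T = k}. h k)"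
      by (rule sum.cong) auto
    also have "\<dots> = card {T \<in> Pow M. card T = k} * h k" by simp
    also have "{T \<in> Pow M. card T = k} = {B. B \<subseteq> M \<and> card B = k}" by auto
    finally show "(\<Sum>T\<in>{T \<in> Pow M. card T = k}. h (card T)) = (card M choose k) * h k"
      using n_subsets[OF assms, of k] by simp
  qed
  finally show ?thesis .
qed

lemma sum_reflect_choose_nat:
  fixes f :: "nat \<Rightarrow> nat"
  shows "(\<Sum>k\<le>m. (m choose k) * f k) = (\<Sum>i\<le>m. (m choose i) * f (m - i))"
proof -
  have "(\<Sum>k\<le>m. (m choose k) * f k) = (\<Sum>i\<le>m. (m choose (m - i)) * f (m - i))"
    by (rule sum.reindex_bij_witness[of _ "\<lambda>i. m - i" "\<lambda>i. m - i"]) auto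
  also have "\<dots> = (\<Sum>i\<le>m. (m choose i) * f (m - i))"
    by (intro sum.cong refl) (simp add: binomial_symmetric[symmetric])
  finally show ?thesis .
qed

lemma partitions_insert:
  assumes xS: "x \<notin> S"
  shows "{P. partition_on (insert x S) P} =
    (\<lambda>(T, Q). insert (insert x T) Q) ` (SIGMA T:Pow S. {Q. partition_on (S - T) Q})"
    (is "?L = ?g ` ?D")
proof (intro equalityI subsetI)
  fix P assume "P \<in> ?L"
  then have P: "partition_on (insert x S) P" by simp
  then obtain p where p: "p \<in> P" "x \<in> p" by (auto simp: partition_on_def)
  have disj: "disjnt p (\<Union>(P - {p}))"
    using P p unfolding partition_on_def pairwise_def disjnt_def by blast
  have PP: "P = insert p (P - {p})" using p by auto
  have "partition_on (insert x S - p) (P - {p})"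
    using P partition_on_insert[OF disj, of "insert x S"] PP by simp
  moreover have "insert x S - p = S - (p - {x})" using p xS by auto
  moreover have "p - {x} \<subseteq> S" using P p by (auto simp: partition_on_def)
  moreover have "insert x (p - {x}) = p" using p by auto
  ultimately have "(p - {x}, P - {p}) \<in> ?D" "?g (p - {x}, P - {p}) = P"
    using PP by auto
  then show "P \<in> ?g ` ?D" by (metis image_eqI)
next
  fix P assume "P \<in> ?g ` ?D"
  then obtain T Q where TQ: "T \<subseteq> S" "partition_on (S - T) Q" "P = insert (insert x T) Q" by auto
  have d: "disjnt (insert x T) (\<Union>Q)" using TQ xS by (auto simp: partition_on_def disjnt_def)
  have "insert x S - insert x T = S - T" using xS by auto
  then have "partition_on (insert x S - insert x T) Q" using TQ(2) by simp
  then have "partition_on (insert x S) (insert (insert x T) Q)"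
    using partition_on_insert[OF d, of "insert x S"] TQ(1) by blast
  then show "P \<in> ?L" using TQ by simp
qed

lemma partitions_insert_inj:
  assumes xS: "x \<notin> S"
  shows "inj_on (\<lambda>(T, Q). insert (insert x T) Q) (SIGMA T:Pow S. {Q. partition_on (S - T) Q})"
proof (rule inj_onI)
  fix a b assume a: "a \<in> (SIGMA T:Pow S. {Q. partition_on (S - T) Q})"
    and b: "b \<in> (SIGMA T:Pow S. {Q. partition_on (S - T) Q})"
    and eq: "(\<lambda>(T, Q). insert (insert x T) Q) a = (\<lambda>(T, Q). insert (insert x T) Q) b"
  obtain T1 Q1 where a': "a = (T1, Q1)" by (cases a)
  obtain T2 Q2 where b': "b = (T2, Q2)" by (cases b)
  have h1: "T1 \<subseteq> S" "partition_on (S - T1) Q1" using a a' by auto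
  have h2: "T2 \<subseteq> S" "partition_on (S - T2) Q2" using b b' by auto
  have n1: "\<forall>q\<in>Q1. x \<notin> q" using h1 xS by (auto simp: partition_on_def)
  have n2: "\<forall>q\<in>Q2. x \<notin> q" using h2 xS by (auto simp: partition_on_def)
  have E: "insert (insert x T1) Q1 = insert (insert x T2) Q2" using eq a' b' by simp
  have "insert x T1 \<in> insert (insert x T2) Q2" using E by blast
  then have "insert x T1 = insert x T2" using n2 by auto
  moreover have "x \<notin> T1" "x \<notin> T2" using h1(1) h2(1) xS by auto
  ultimately have T: "T1 = T2" by (metis Diff_insert_absorb)
  have "Q1 = insert (insert x T1) Q1 - {insert x T1}" using n1 by auto
  also have "\<dots> = insert (insert x T2) Q2 - {insert x T2}" using E T by simp
  also have "\<dots> = Q2" using n2 by auto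
  finally show "a = b" using a' b' T by simp
qed

lemma bell_Suc_nat: "bell_poly (Suc m) (1::nat) = (\<Sum>k\<le>m. (m choose k) * bell_poly (m - k) 1)"
  using bell_poly_Suc[of m "1::nat"] sum_reflect_choose_nat[of m "\<lambda>k. bell_poly k 1"] by simp

lemma card_partitions:
  "finite S \<Longrightarrow> card {P. partition_on S P} = bell_poly (card S) (1::nat)"
proof (induction "card S" arbitrary: S rule: less_induct)
  case less
  show ?case
  proof (cases "S = {}")
    case True
    have "{P. partition_on S P} = {{}}" using True partition_on_empty by auto
    then show ?thesis using True by (simp add: bell_poly_def)
  next
    case False
    then obtain x where x: "x \<in> S" by blast
    define S0 where "S0 = S - {x}"
    have S: "S = insert x S0" and xS0: "x \<notin> S0" using x unfolding S0_def by auto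
    have fin0: "finite S0" using less.prems unfolding S0_def by simp
    have cS: "card S = Suc (card S0)" using S xS0 fin0 by simp
    let ?D = "SIGMA T:Pow S0. {Q. partition_on (S0 - T) Q}"
    have "card {P. partition_on S P} = card ?D"
      unfolding S partitions_insert[OF xS0] by (rule card_image[OF partitions_insert_inj[OF xS0]])
    also have "\<dots> = (\<Sum>T\<in>Pow S0. card {Q. partition_on (S0 - T) Q})"
      by (rule card_SigmaI) (use fin0 finitely_many_partition_on in auto)
    also have "\<dots> = (\<Sum>T\<in>Pow S0. bell_poly (card S0 - card T) 1)"
    proof (rule sum.cong[OF refl])
      fix T assume T: "T \<in> Pow S0"
      have "card (S0 - T) < card S" using cS fin0 T by (simp add: card_Diff_subset card_mono le_imp_less_Suc)
      then have "card {Q. partition_on (S0 - T) Q} = bell_poly (card (S0 - T)) 1"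
        using less.hyps fin0 by blast
      then show "card {Q. partition_on (S0 - T) Q} = bell_poly (card S0 - card T) 1"
        using T fin0 by (simp add: card_Diff_subset finite_subset)
    qed
    also have "\<dots> = (\<Sum>k\<le>card S0. (card S0 choose k) * bell_poly (card S0 - k) 1)"
      by (rule sum_Pow_card[OF fin0, of "\<lambda>k. bell_poly (card S0 - k) 1"])
    also have "\<dots> = bell_poly (card S) 1" using cS bell_Suc_nat by simp
    finally show ?thesis .
  qed
qed


lemma finite_edgesOn: "finite V \<Longrightarrow> finite (edgesOn V)"
  unfolding edgesOn_def by (rule finite_subset[of _ "Pow V"]) auto

lemma finite_RF: "finite V \<Longrightarrow> finite (RF V R)"
  unfolding RF_def by (rule finite_subset[of _ "Pow (edgesOn V)"]) (auto simp: finite_edgesOn)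

lemma RF_empty: "RF {} {} = {{}}"
proof -
  have "edgesOn {} = {}" unfolding edgesOn_def by auto
  then show ?thesis unfolding RF_def using no_cycle_empty by auto
qed

lemma RF_noroot: "V \<noteq> {} \<Longrightarrow> RF V {} = {}"
  unfolding RF_def by auto

lemma card_RF:
  "finite V \<Longrightarrow> R \<subseteq> V \<Longrightarrow> card (RF V R) = Gc (card V) (card R)"
proof (induction "card V" arbitrary: V R)
  case 0
  then have "V = {}" "R = {}" by auto
  then show ?case using RF_empty by simp
next
  case (Suc n)
  have Vne: "V \<noteq> {}" using Suc.hyps(2) by auto
  show ?case
  proof (cases "R = {}")
    case True
    then show ?thesis using RF_noroot[OF Vne] Suc.hyps(2)[symmetric] by simp
  next
    case False
    then obtain \<rho> where rR: "\<rho> \<in> R" by blast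
    have finR: "finite R" using Suc.prems finite_subset by auto
    have RF_eq: "RF V R = Phi \<rho> ` Dom V R \<rho>"
    proof (intro equalityI subsetI)
      fix F assume "F \<in> RF V R"
      then show "F \<in> Phi \<rho> ` Dom V R \<rho>" using Phi_onto Suc.prems rR by blast
    next
      fix F assume "F \<in> Phi \<rho> ` Dom V R \<rho>"
      then obtain S P F' where x: "(S, P, F') \<in> Dom V R \<rho>" "F = Phi \<rho> (S, P, F')" by auto
      then show "F \<in> RF V R" using Phi_into[OF Suc.prems rR] unfolding Dom_def Phi_def by auto
    qed
    let ?M = "V - R"
    have finM: "finite ?M" using Suc.prems by simp
    have cM: "card ?M = Suc n - card R" using Suc.prems Suc.hyps(2) by (simp add: card_Diff_subset finR)
    have inner: "card (RF (V - {\<rho>}) ((R - {\<rho>}) \<union> S)) = Gc n (card R - 1 + card S)" if S: "S \<in> Pow ?M" for S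
    proof -
      have "\<rho> \<in> V" using rR Suc.prems by auto
      then have "card (V - {\<rho>}) = n" using Suc.hyps(2) Suc.prems by (simp add: card_Diff_singleton)
      moreover have "(R - {\<rho>}) \<union> S \<subseteq> V - {\<rho>}" using S Suc.prems rR by auto
      moreover have "card ((R - {\<rho>}) \<union> S) = card R - 1 + card S"
      proof -
        have "finite S" using S finM finite_subset by auto
        moreover have "(R - {\<rho>}) \<inter> S = {}" using S by auto
        ultimately have "card ((R - {\<rho>}) \<union> S) = card (R - {\<rho>}) + card S"
          using finR by (simp add: card_Un_disjoint)
        then show ?thesis using rR finR by simp
      qed
      ultimately show ?thesis using Suc.hyps(1)[of "V - {\<rho>}" "(R - {\<rho>}) \<union> S"] Suc.prems by simp
    qed
    have "card (RF V R) = card (Dom V R \<rho>)"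
      unfolding RF_eq by (rule card_image[OF Phi_inj[OF rR]])
    also have "\<dots> = (\<Sum>S\<in>Pow ?M. card (SIGMA P:{P. partition_on S P}. RF (V - {\<rho>}) ((R - {\<rho>}) \<union> S)))"
      unfolding Dom_def
    proof (rule card_SigmaI)
      show "finite (Pow ?M)" using finM by simp
      show "\<forall>S\<in>Pow ?M. finite (SIGMA P:{P. partition_on S P}. RF (V - {\<rho>}) ((R - {\<rho>}) \<union> S))"
      proof
        fix S assume "S \<in> Pow ?M"
        then have "finite S" using finM finite_subset by auto
        then have "finite {P. partition_on S P}" by (rule finitely_many_partition_on)
        moreover have "finite (RF (V - {\<rho>}) ((R - {\<rho>}) \<union> S))" using finite_RF Suc.prems(1) by simp
        ultimately show "finite (SIGMA P:{P. partition_on S P}. RF (V - {\<rho>}) ((R - {\<rho>}) \<union> S))"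
          by (simp add: finite_SigmaI)
      qed
    qed
    also have "\<dots> = (\<Sum>S\<in>Pow ?M. bell_poly (card S) 1 * Gc n (card R - 1 + card S))"
    proof (rule sum.cong[OF refl])
      fix S assume S: "S \<in> Pow ?M"
      have fS: "finite S" using S finM finite_subset by auto
      have "card (SIGMA P:{P. partition_on S P}. RF (V - {\<rho>}) ((R - {\<rho>}) \<union> S))
          = card {P. partition_on S P} * card (RF (V - {\<rho>}) ((R - {\<rho>}) \<union> S))"
        by (simp add: card_cartesian_product)
      then show "card (SIGMA P:{P. partition_on S P}. RF (V - {\<rho>}) ((R - {\<rho>}) \<union> S))
          = bell_poly (card S) 1 * Gc n (card R - 1 + card S)"
        using card_partitions[OF fS] inner[OF S] by simp
    qed
    also have "\<dots> = (\<Sum>k\<le>card ?M. (card ?M choose k) * (bell_poly k 1 * Gc n (card R - 1 + k)))"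
      by (rule sum_Pow_card[OF finM, of "\<lambda>k. bell_poly k 1 * Gc n (card R - 1 + k)"])
    also have "\<dots> = Gc (Suc n) (card R)"
      using False finR cM by (simp add: mult.assoc)
    finally show ?thesis using Suc.hyps(2) by simp
  qed
qed


lemma hyperedges_eq: "hyperedges n = edgesOn {1..n}"
  by (simp add: hyperedges_def edgesOn_def)

lemma rooted_iff: "(F, R) \<in> rooted_hyperforests n \<longleftrightarrow> R \<subseteq> {1..n} \<and> F \<in> RF {1..n} R"
  unfolding rooted_hyperforests_def RF_def spanning_hyperforest_def hcomponents_def hyperedges_eq
  by auto

lemma comps_card:
  assumes finV: "finite V" and RV: "R \<subseteq> V" and FR: "F \<in> RF V R"
  shows "card ((\<lambda>u. {v\<in>V. hconn F u v}) ` V) = card R"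
proof -
  let ?c = "\<lambda>u. {v\<in>V. hconn F u v}"
  have Fr: "\<And>u. u \<in> V \<Longrightarrow> card (R \<inter> ?c u) = 1" using RF_D[OF FR] by auto
  have "?c ` V = ?c ` R"
  proof (intro equalityI subsetI)
    fix C assume "C \<in> ?c ` V"
    then obtain u where u: "u \<in> V" "C = ?c u" by auto
    then have "card (R \<inter> ?c u) = 1" using Fr by simp
    then obtain r where r: "R \<inter> ?c u = {r}" by (rule card_1_singletonE)
    then have rr: "r \<in> R" "hconn F u r" by auto
    have "?c r = ?c u"
      using rr(2) hconn_sym hconn_trans by blast
    then show "C \<in> ?c ` R" using u rr by auto
  next
    fix C assume "C \<in> ?c ` R" then show "C \<in> ?c ` V" using RV by auto
  qed
  moreover have "inj_on ?c R"
  proof (rule inj_onI)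
    fix r1 r2 assume r: "r1 \<in> R" "r2 \<in> R" "?c r1 = ?c r2"
    have "r2 \<in> ?c r2" using r RV by auto
    then have "r2 \<in> R \<inter> ?c r1" using r by simp
    moreover have "r1 \<in> R \<inter> ?c r1" using r RV by auto
    moreover have "card (R \<inter> ?c r1) = 1" using Fr r RV by auto
    ultimately show "r1 = r2" using card1_eq by metis
  qed
  ultimately show ?thesis by (simp add: card_image)
qed

lemma Gc_closed_nat: "r \<le> n \<Longrightarrow> n * Gc n r = r * bell_poly (n - r) n"
proof -
  assume "r \<le> n"
  then have "real n * real (Gc n r) = real r * bell_poly (n - r) (real n)" by (rule Gc_closed)
  then have "real (n * Gc n r) = real (r * bell_poly (n - r) n)" by (simp add: of_nat_bell)
  then show ?thesis by (simp only: of_nat_eq_iff)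
qed

lemma inj_swap: "inj_on prod.swap A"
  by (rule inj_onI) auto

lemma rooted_r:
  "{(F, R) \<in> rooted_hyperforests n. card (hcomponents n F) = r}
     = prod.swap ` (SIGMA R:{R. R \<subseteq> {1..n} \<and> card R = r}. RF {1..n} R)"
proof (intro equalityI subsetI)
  fix x assume "x \<in> {(F, R) \<in> rooted_hyperforests n. card (hcomponents n F) = r}"
  then obtain F R where x: "x = (F, R)" "(F, R) \<in> rooted_hyperforests n" "card (hcomponents n F) = r" by auto
  then have h: "R \<subseteq> {1..n}" "F \<in> RF {1..n} R" using rooted_iff by auto
  then have "card R = r" using comps_card[of "{1..n}" R F] x(3) unfolding hcomponents_def by simp
  then show "x \<in> prod.swap ` (SIGMA R:{R. R \<subseteq> {1..n} \<and> card R = r}. RF {1..n} R)"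
    using h x(1) by (auto intro!: image_eqI[of _ _ "(R, F)"])
next
  fix x assume "x \<in> prod.swap ` (SIGMA R:{R. R \<subseteq> {1..n} \<and> card R = r}. RF {1..n} R)"
  then obtain F R where x: "x = (F, R)" "R \<subseteq> {1..n}" "card R = r" "F \<in> RF {1..n} R" by auto
  then have "card (hcomponents n F) = r" using comps_card[of "{1..n}" R F] unfolding hcomponents_def by simp
  then show "x \<in> {(F, R) \<in> rooted_hyperforests n. card (hcomponents n F) = r}"
    using x rooted_iff by auto
qed

lemma card_rooted_r:
  "card {(F, R) \<in> rooted_hyperforests n. card (hcomponents n F) = r} = (n choose r) * Gc n r"
proof -
  have "card {(F, R) \<in> rooted_hyperforests n. card (hcomponents n F) = r}
      = card (SIGMA R:{R. R \<subseteq> {1..n} \<and> card R = r}. RF {1..n} R)"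
    unfolding rooted_r by (rule card_image[OF inj_swap])
  also have "\<dots> = (\<Sum>R\<in>{R. R \<subseteq> {1..n} \<and> card R = r}. card (RF {1..n} R))"
    by (rule card_SigmaI) (auto simp: finite_RF)
  also have "\<dots> = (\<Sum>R\<in>{R. R \<subseteq> {1..n} \<and> card R = r}. Gc n r)"
    by (rule sum.cong) (auto simp: card_RF)
  also have "\<dots> = (n choose r) * Gc n r"
    using n_subsets[of "{1..n}" r] by simp
  finally show ?thesis .
qed

lemma closed_r:
  assumes "1 \<le> r" "r \<le> n"
  shows "(n choose r) * Gc n r = ((n - 1) choose (r - 1)) * bell_poly (n - r) n"
proof -
  have "n * ((n choose r) * Gc n r) = (n choose r) * (r * bell_poly (n - r) n)"
    using Gc_closed_nat[OF assms(2)] by (simp add: mult_ac)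
  also have "\<dots> = (r * (n choose r)) * bell_poly (n - r) n" by (simp add: mult_ac)
  also have "\<dots> = n * (((n - 1) choose (r - 1)) * bell_poly (n - r) n)"
    using times_binomial_minus1_eq[of r n] assms by (simp add: mult_ac)
  finally show ?thesis using assms by simp
qed

lemma rooted_all: "rooted_hyperforests n = prod.swap ` (SIGMA R:Pow {1..n}. RF {1..n} R)"
proof (intro equalityI subsetI)
  fix x assume x: "x \<in> rooted_hyperforests n"
  obtain F R where FR: "x = (F, R)" by (cases x)
  then show "x \<in> prod.swap ` (SIGMA R:Pow {1..n}. RF {1..n} R)"
    using x rooted_iff by (auto intro!: image_eqI[of _ _ "(R, F)"])
next
  fix x assume "x \<in> prod.swap ` (SIGMA R:Pow {1..n}. RF {1..n} R)"
  then show "x \<in> rooted_hyperforests n" using rooted_iff by auto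
qed

lemma card_rooted_total:
  assumes n: "1 \<le> n"
  shows "n * card (rooted_hyperforests n) = bell_poly n n"
proof -
  have "card (rooted_hyperforests n) = card (SIGMA R:Pow {1..n}. RF {1..n} R)"
    unfolding rooted_all by (rule card_image[OF inj_swap])
  also have "\<dots> = (\<Sum>R\<in>Pow {1..n}. card (RF {1..n} R))"
    by (rule card_SigmaI) (auto simp: finite_RF)
  also have "\<dots> = (\<Sum>R\<in>Pow {1..n}. Gc n (card R))"
    by (rule sum.cong) (auto simp: card_RF)
  also have "\<dots> = (\<Sum>k\<le>n. (n choose k) * Gc n k)"
    using sum_Pow_card[of "{1..n}" "Gc n"] by simp
  finally have c: "card (rooted_hyperforests n) = (\<Sum>k\<le>n. (n choose k) * Gc n k)" .
  obtain m where m: "n = Suc m" using n by (cases n) auto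
  have "n * card (rooted_hyperforests n) = (\<Sum>k\<le>n. (n choose k) * (n * Gc n k))"
    unfolding c by (simp add: sum_distrib_left mult_ac)
  also have "\<dots> = (\<Sum>k\<le>n. (n choose k) * (k * bell_poly (n - k) n))"
    by (rule sum.cong) (auto simp: Gc_closed_nat)
  also have "\<dots> = (\<Sum>i\<le>m. (Suc m choose Suc i) * (Suc i * bell_poly (m - i) n))"
    unfolding m by (simp only: sum.atMost_Suc_shift) simp
  also have "\<dots> = (\<Sum>i\<le>m. Suc m * ((m choose i) * bell_poly (m - i) n))"
    by (rule sum.cong[OF refl]) (metis Suc_times_binomial mult.assoc mult.commute)
  also have "\<dots> = Suc m * (\<Sum>i\<le>m. (m choose i) * bell_poly (m - i) n)"
    by (simp add: sum_distrib_left)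
  also have "\<dots> = n * (\<Sum>k\<le>m. (m choose k) * bell_poly k n)"
    using sum_reflect_choose_nat[of m "\<lambda>k. bell_poly k n"] m by simp
  also have "\<dots> = bell_poly n n"
    using bell_poly_Suc[of m n] m by simp
  finally show ?thesis .
qed

lemma trees_eq:
  assumes n: "1 \<le> n"
  shows "{(F, R) \<in> rooted_hyperforests n. card (hcomponents n F) = 1}
     = {F. spanning_hypertree n F} \<times> ((\<lambda>v. {v}) ` {1..n})"
proof (intro equalityI subsetI)
  fix x assume "x \<in> {(F, R) \<in> rooted_hyperforests n. card (hcomponents n F) = 1}"
  then obtain F R where x: "x = (F, R)" "(F, R) \<in> rooted_hyperforests n" "card (hcomponents n F) = 1" by auto
  then have h: "R \<subseteq> {1..n}" "F \<in> RF {1..n} R" using rooted_iff by auto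
  then have "card R = 1" using comps_card[of "{1..n}" R F] x(3) unfolding hcomponents_def by simp
  then obtain v where v: "R = {v}" by (rule card_1_singletonE)
  have "spanning_hypertree n F"
    using x(2,3) unfolding spanning_hypertree_def rooted_hyperforests_def by auto
  then show "x \<in> {F. spanning_hypertree n F} \<times> ((\<lambda>v. {v}) ` {1..n})" using x(1) v h(1) by auto
next
  fix x assume "x \<in> {F. spanning_hypertree n F} \<times> ((\<lambda>v. {v}) ` {1..n})"
  then obtain F v where x: "x = (F, {v})" "spanning_hypertree n F" "v \<in> {1..n}" by auto
  let ?c = "\<lambda>u. {w\<in>{1..n}. hconn F u w}"
  have c1: "card (hcomponents n F) = 1" and sf: "spanning_hyperforest n F"
    using x(2) unfolding spanning_hypertree_def by auto
  have "?c v \<in> hcomponents n F" using x(3) unfolding hcomponents_def by auto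
  then have H: "hcomponents n F = {?c v}" using c1 by (metis card_1_singletonE singletonD)
  have "\<forall>C\<in>hcomponents n F. card ({v} \<inter> C) = 1"
    using H x(3) by auto
  then have "(F, {v}) \<in> rooted_hyperforests n"
    using sf x(3) unfolding rooted_hyperforests_def by auto
  then show "x \<in> {(F, R) \<in> rooted_hyperforests n. card (hcomponents n F) = 1}" using x(1) c1 by auto
qed

theorem mainTheorem14:
  fixes n :: nat
  assumes "1 \<le> n"
  shows "(\<forall>r. 1 \<le> r \<and> r \<le> n \<longrightarrow>
           card {(F, R) \<in> rooted_hyperforests n. card (hcomponents n F) = r}
             = ((n - 1) choose (r - 1)) * bell_poly (n - r) n
         \<and> bell_poly (n - r) n = (\<Sum>l\<le>n - r. Stirling (n - r) l * n ^ l))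
    \<and> real (card (rooted_hyperforests n)) = real (bell_poly n n) / real n
    \<and> real (card {F. spanning_hypertree n F}) = real (bell_poly (n - 1) n) / real n
    \<and> real (bell_poly (n - 1) n) / real n
           = (\<Sum>l\<le>n - 1. real (Stirling (n - 1) l) * real n powi (int l - 1))"
proof (intro conjI allI impI)
  fix r assume r: "1 \<le> r \<and> r \<le> n"
  show "card {(F, R) \<in> rooted_hyperforests n. card (hcomponents n F) = r}
             = ((n - 1) choose (r - 1)) * bell_poly (n - r) n"
    using card_rooted_r closed_r r by simp
  show "bell_poly (n - r) n = (\<Sum>l\<le>n - r. Stirling (n - r) l * n ^ l)"
    by (simp add: bell_poly_def)
next
  have n0: "real n \<noteq> 0" using assms by simp
  have "real n * real (card (rooted_hyperforests n)) = real (bell_poly n n)"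
    using card_rooted_total[OF assms] by (metis of_nat_mult)
  then show "real (card (rooted_hyperforests n)) = real (bell_poly n n) / real n"
    using n0 by (simp add: field_simps)
next
  have n0: "real n \<noteq> 0" using assms by simp
  have "card {(F, R) \<in> rooted_hyperforests n. card (hcomponents n F) = 1} = bell_poly (n - 1) n"
    using card_rooted_r closed_r[of 1 n] assms by simp
  moreover have "card {(F, R) \<in> rooted_hyperforests n. card (hcomponents n F) = 1}
      = card {F. spanning_hypertree n F} * n"
    unfolding trees_eq[OF assms] by (simp add: card_cartesian_product card_image)
  ultimately have "real (card {F. spanning_hypertree n F}) * real n = real (bell_poly (n - 1) n)"
    by (metis of_nat_mult)
  then show "real (card {F. spanning_hypertree n F}) = real (bell_poly (n - 1) n) / real n"
    using n0 by (simp add: field_simps)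
next
  have n0: "real n \<noteq> 0" using assms by simp
  have "real (bell_poly (n - 1) n) = (\<Sum>l\<le>n - 1. real (Stirling (n - 1) l) * real n ^ l)"
    by (simp add: bell_poly_def)
  moreover have "real n powi (int l - 1) = real n ^ l / real n" for l
    using n0 by (simp add: power_int_diff)
  ultimately show "real (bell_poly (n - 1) n) / real n
           = (\<Sum>l\<le>n - 1. real (Stirling (n - 1) l) * real n powi (int l - 1))"
    by (simp add: sum_divide_distrib)
qed


end
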